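(* Let $M\ge 1$, let $1\le i\le M$, and consider a network $\mathbf{h}_0=\mathbf{x}$, $\mathbf{h}_k=f_k(\mathbf{h}_{k-1})$ for $k=1,\dots,M$, where each layer map has the form $f_k(\mathbf{h}_{k-1})=W_k\, s_k(\mathbf{h}_{k-1})$, with $W_k$ a weight matrix and $s_k$ an arbitrary differentiable, monotonically increasing function applied element-wise. Assume that each $f_k$ is invertible and that the feedback maps are its exact inverses, $g_k=f_k^{-1}$, $k=1,\dots,M$. Let $L(\mathbf{h}_M,\mathbf{y})$ be a differentiable loss for a training pair $(\mathbf{x},\mathbf{y})$. The back-propagation update of layer $i$ is $\delta W_i^{bp}=-\dfrac{\partial L(\mathbf{h}_M,\mathbf{y})}{\partial W_i}$, where $\mathbf{h}_M$ is regarded as a function of all weights through the forward pass. The target propagation update of layer $i$ is defined as follows: for a step size $\hat\eta>0$ set $\hat{\mathbf{h}}_M=\mathbf{h}_M-\hat\eta\,\dfrac{\partial L(\mathbf{h}_M,\mathbf{y})}{\partial \mathbf{h}_M}$, then recursively $\hat{\mathbf{h}}_{k}=g_{k+1}(\hat{\mathbf{h}}_{k+1})$ for $k=M-1,\dots,i$, and $\delta W_i^{tp}=-\dfrac{\partial \|W_i\, s_i(\mathbf{h}_{i-1})-\hat{\mathbf{h}}_i\|_2^2}{\partial W_i}$, where $\hat{\mathbf{h}}_i$ and $\mathbf{h}_{i-1}$ are treated as constants. Let $\alpha$ denote the angle between $\delta W_i^{tp}$ and $\delta W_i^{bp}$ (viewed as vectors). Let $J_{f_k}$ denote the Jacobian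 matrix of $f_k$ at $\mathbf{h}_{k-1}$, and let $\lambda_{\max}$ and $\lambda_{\min}$ be the largest and smallest singular values of $(J_{f_M}\cdots J_{f_{i+1}})^T$. Then there are functions $\Delta_1(\hat\eta)$, $\Delta_2(\hat\eta)$ that tend to $0$ as $\hat\eta\to 0$ such that, if $\hat\eta$ is sufficiently small, $$0<\frac{1+\Delta_1(\hat\eta)}{\frac{\lambda_{\max}}{\lambda_{\min}}+\Delta_2(\hat\eta)}\le \cos(\alpha)\le 1.$$
   Context: Biases are absorbed into the weight matrices $W_k$. "Target propagation" assigns to each hidden layer a target value propagated downward through the feedback maps $g_k$ and updates each layer's weights by a gradient step on the layer-local squared distance to its target, as described in the claim. When $i=M$ the product $J_{f_M}\cdots J_{f_{i+1}}$ is the empty product (the identity). *)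

theory Defs
  imports "HOL-Analysis.Analysis"
begin

definition layer :: "(nat \<Rightarrow> real^'n^'n) \<Rightarrow> (nat \<Rightarrow> real \<Rightarrow> real) \<Rightarrow> nat \<Rightarrow> real^'n \<Rightarrow> real^'n" where
  "layer W s k h = W k *v (\<chi> j. s k (h $ j))"

fun fwd :: "(nat \<Rightarrow> real^'n^'n) \<Rightarrow> (nat \<Rightarrow> real \<Rightarrow> real) \<Rightarrow> real^'n \<Rightarrow> nat \<Rightarrow> real^'n" where
  "fwd W s x 0 = x"
| "fwd W s x (Suc k) = layer W s (Suc k) (fwd W s x k)"

(* Target propagation downward: tp_back g M v j = g_{M-j+1}( ... g_M(v)), i.e. the target
  of layer M-j when the top target is v. *)
fun tp_back :: "(nat \<Rightarrow> real^'n \<Rightarrow> real^'n) \<Rightarrow> nat \<Rightarrow> real^'n \<Rightarrow> nat \<Rightarrow> real^'n" where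
  "tp_back g M v 0 = v"
| "tp_back g M v (Suc j) = g (M - j) (tp_back g M v j)"

definition grad :: "('a::real_inner \<Rightarrow> real) \<Rightarrow> 'a \<Rightarrow> 'a" where
  "grad f x = (THE g. (f has_derivative (\<lambda>d. g \<bullet> d)) (at x))"

definition jacobian :: "(real^'n \<Rightarrow> real^'m) \<Rightarrow> real^'n \<Rightarrow> real^'n^'m" where
  "jacobian f x = matrix (frechet_derivative f (at x))"

fun prodmat :: "(nat \<Rightarrow> real^'n^'n) \<Rightarrow> nat list \<Rightarrow> real^'n^'n" where
  "prodmat J [] = mat 1"
| "prodmat J (k # ks) = J k ** prodmat J ks"

definition singular_values :: "real^'n^'m \<Rightarrow> real set" where
  "singular_values A = {\<sigma>. \<sigma> \<ge> 0 \<and> (\<exists>v. v \<noteq> 0 \<and> (transpose A ** A) *v v = (\<sigma>^2) *\<^sub>R v)}"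

definition sv_max :: "real^'n^'m \<Rightarrow> real" where
  "sv_max A = Max (singular_values A)"

definition sv_min :: "real^'n^'m \<Rightarrow> real" where
  "sv_min A = Min (singular_values A)"

definition vangle :: "'a::real_inner \<Rightarrow> 'a \<Rightarrow> real" where
  "vangle u v = arccos ((u \<bullet> v) / (norm u * norm v))"

end

theory Submission
  imports Defs
begin


lemma rayleigh_max:
  fixes S :: "real^'n \<Rightarrow> real^'n"
  assumes lin: "linear S" and sym: "\<And>x y. x \<bullet> S y = S x \<bullet> y"
  shows "\<exists>\<mu> v. v \<noteq> 0 \<and> S v = \<mu> *\<^sub>R v \<and> (\<forall>w. w \<bullet> S w \<le> \<mu> * (w \<bullet> w))"
proof -
  let ?q = "\<lambda>w. w \<bullet> S w"
  have cS: "continuous_on UNIV S" using lin by (simp add: linear_continuous_on linear_linear)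
  have cq: "continuous_on (sphere 0 1) ?q"
    by (intro continuous_intros continuous_on_subset[OF cS]) auto
  have ne: "sphere (0::real^'n) 1 \<noteq> {}"
    using sphere_eq_empty by auto
  obtain w0 where w0: "w0 \<in> sphere 0 1" and mx: "\<And>w. w \<in> sphere 0 1 \<Longrightarrow> ?q w \<le> ?q w0"
    using compact_attains_sup[OF compact_continuous_image[OF cq compact_sphere]] ne
    by (metis (no_types, lifting) image_iff image_is_empty)
  define \<mu> where "\<mu> = ?q w0"
  have n0: "norm w0 = 1" using w0 by simp
  have bound: "?q w \<le> \<mu> * (w \<bullet> w)" for w
  proof (cases "w = 0")
    case True then show ?thesis by (simp add: linear_0[OF lin])
  next
    case False
    let ?u = "(1 / norm w) *\<^sub>R w"
    have "?u \<in> sphere 0 1" using False by simp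
    then have h1: "?q ?u \<le> \<mu>" using mx \<mu>_def by blast
    have h2: "?q ?u = ?q w / (norm w)^2"
      by (simp add: linear_scale[OF lin] power2_eq_square field_simps)
    have h3: "w \<bullet> w = (norm w)^2" by (simp add: power2_norm_eq_inner)
    have h4: "(norm w)^2 > 0" using False by simp
    have "?q w / (norm w)^2 \<le> \<mu>" using h1 h2 by simp
    then show ?thesis using h3 h4 by (simp add: divide_le_eq mult.commute)
  qed
  define T where "T = (\<lambda>w. \<mu> *\<^sub>R w - S w)"
  have linT: "linear T" by (rule linearI) (auto simp: T_def linear_add[OF lin] linear_scale[OF lin] algebra_simps)
  have Tpos: "w \<bullet> T w \<ge> 0" for w using bound[of w] by (simp add: T_def inner_diff_right)
  have Tw0: "w0 \<bullet> T w0 = 0" unfolding T_def using n0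
    by (simp add: inner_diff_right \<mu>_def power2_norm_eq_inner[symmetric])
  have symT: "x \<bullet> T y = T x \<bullet> y" for x y
    by (simp add: T_def inner_diff_right inner_diff_left sym)
  define d where "d = T w0"
  define a where "a = d \<bullet> d"
  define c where "c = d \<bullet> T d"
  have c0: "c \<ge> 0" using Tpos c_def by simp
  have quad: "0 \<le> 2 * t * a + t^2 * c" for t
  proof -
    have "0 \<le> (w0 + t *\<^sub>R d) \<bullet> T (w0 + t *\<^sub>R d)" by (rule Tpos)
    also have "\<dots> = w0 \<bullet> T w0 + t * (w0 \<bullet> T d) + t * (d \<bullet> T w0) + t^2 * (d \<bullet> T d)"
    proof -
      have e: "T (w0 + t *\<^sub>R d) = T w0 + t *\<^sub>R T d" by (simp add: linear_add[OF linT] linear_scale[OF linT])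
      show ?thesis unfolding e inner_add_left inner_add_right inner_scaleR_left inner_scaleR_right power2_eq_square
        by (simp add: distrib_left)
    qed
    finally have "0 \<le> w0 \<bullet> T w0 + t * (w0 \<bullet> T d) + t * (d \<bullet> T w0) + t^2 * (d \<bullet> T d)" .
    moreover have "w0 \<bullet> T d = d \<bullet> T w0" by (metis symT inner_commute)
    moreover have "d \<bullet> T w0 = a" by (simp add: a_def d_def)
    ultimately show ?thesis using Tw0 by (simp add: c_def mult_ac)
  qed
  have "a = 0"
  proof (rule ccontr)
    assume "a \<noteq> 0"
    then have ap: "a > 0" by (simp add: a_def)
    define t where "t = - a / (c + 1)"
    have tn: "t < 0" using ap c0 by (simp add: t_def divide_neg_pos)
    have "c / (c + 1) \<le> 1" using c0 by (simp add: divide_le_eq)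
    then have "a * (c / (c + 1)) \<le> a" using ap mult_left_mono[of "c/(c+1)" 1 a] by simp
    moreover have "t * c = - (a * (c / (c + 1)))" by (simp add: t_def)
    ultimately have "2 * a + t * c > 0" using ap by linarith
    then have "t * (2 * a + t * c) < 0" using tn by (simp add: mult_neg_pos)
    moreover have "2 * t * a + t^2 * c = t * (2 * a + t * c)" by (simp add: algebra_simps power2_eq_square)
    moreover have "0 \<le> 2 * t * a + t^2 * c" by (rule quad)
    ultimately show False by linarith
  qed
  then have "T w0 = 0" by (simp add: a_def d_def)
  then have "S w0 = \<mu> *\<^sub>R w0" by (simp add: T_def)
  moreover have "w0 \<noteq> 0" using n0 by auto
  ultimately show ?thesis using bound by blast
qed

lemma sym_mat:
  fixes B :: "real^'n^'n"
  assumes "transpose B = B"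
  shows "x \<bullet> (B *v y) = (B *v x) \<bullet> y"
  by (metis assms dot_lmul_matrix transpose_matrix_vector)

lemma normsq_mat:
  fixes A :: "real^'n^'m"
  shows "(A *v w) \<bullet> (A *v w) = w \<bullet> ((transpose A ** A) *v w)"
  by (metis dot_lmul_matrix inner_commute matrix_vector_mul_assoc transpose_matrix_vector)

lemma sym_ata: "transpose (transpose A ** (A::real^'n^'m)) = transpose A ** A"
  by (simp add: matrix_transpose_mul)

lemma sv_finite:
  fixes A :: "real^'n^'n"
  shows "finite (singular_values A)"
proof -
  define B where "B = transpose A ** A"
  have symB: "transpose B = B" by (simp add: B_def sym_ata)
  define E where "E = {\<mu>. \<exists>v. v \<noteq> 0 \<and> B *v v = \<mu> *\<^sub>R v}"
  define vf where "vf = (\<lambda>\<mu>. SOME v. v \<noteq> 0 \<and> B *v v = \<mu> *\<^sub>R v)"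
  have vf: "vf \<mu> \<noteq> 0 \<and> B *v vf \<mu> = \<mu> *\<^sub>R vf \<mu>" if "\<mu> \<in> E" for \<mu>
    using that unfolding E_def vf_def by (metis (mono_tags, lifting) mem_Collect_eq someI_ex)
  have inj: "inj_on vf E"
  proof (rule inj_onI)
    fix x y assume xy: "x \<in> E" "y \<in> E" "vf x = vf y"
    then have "x *\<^sub>R vf x = y *\<^sub>R vf x" using vf by metis
    then show "x = y" using vf[OF xy(1)] by (simp add: scaleR_cancel_right)
  qed
  have orth: "pairwise orthogonal (vf ` E)"
  proof (clarsimp simp: pairwise_def)
    fix x y assume x: "x \<in> E" and y: "y \<in> E" and ne: "vf x \<noteq> vf y"
    then have "x \<noteq> y" by blast
    have "x * (vf x \<bullet> vf y) = (B *v vf x) \<bullet> vf y" using vf[OF x] by simp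
    also have "\<dots> = vf x \<bullet> (B *v vf y)" using sym_mat[OF symB] by simp
    also have "\<dots> = y * (vf x \<bullet> vf y)" using vf[OF y] by simp
    finally have "(x - y) * (vf x \<bullet> vf y) = 0" by (simp add: algebra_simps)
    then show "orthogonal (vf x) (vf y)" using \<open>x \<noteq> y\<close> by (simp add: orthogonal_def)
  qed
  have "0 \<notin> vf ` E" using vf by auto
  then have "independent (vf ` E)" using orth pairwise_orthogonal_independent by blast
  then have "finite (vf ` E)" using independent_bound by blast
  then have fE: "finite E" using inj finite_imageD by blast
  have "singular_values A \<subseteq> sqrt ` E"
  proof
    fix \<sigma> assume "\<sigma> \<in> singular_values A"
    then have s: "\<sigma> \<ge> 0" "\<sigma>^2 \<in> E" unfolding singular_values_def E_def B_def by auto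
    then show "\<sigma> \<in> sqrt ` E" by (metis image_eqI real_sqrt_unique)
  qed
  then show ?thesis using fE finite_subset by blast
qed

lemma sv_upper:
  fixes A :: "real^'n^'n"
  shows "singular_values A \<noteq> {} \<and> sv_max A \<ge> 0 \<and> (\<forall>w. norm (A *v w) \<le> sv_max A * norm w)"
proof -
  define B where "B = transpose A ** A"
  have symB: "transpose B = B" by (simp add: B_def sym_ata)
  obtain \<mu> v where v: "v \<noteq> 0" "B *v v = \<mu> *\<^sub>R v" and bd: "\<forall>w. w \<bullet> (B *v w) \<le> \<mu> * (w \<bullet> w)"
    using rayleigh_max[of "\<lambda>w. B *v w"] sym_mat[OF symB] by auto
  have "v \<bullet> (B *v v) \<ge> 0" using normsq_mat[of A v] B_def by (metis inner_ge_zero)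
  then have "\<mu> * (v \<bullet> v) \<ge> 0" using v by simp
  moreover have "v \<bullet> v > 0" using v by simp
  ultimately have mu0: "\<mu> \<ge> 0" by (simp add: zero_le_mult_iff)
  have mem: "sqrt \<mu> \<in> singular_values A"
    unfolding singular_values_def using v mu0 B_def by auto
  have fin: "finite (singular_values A)" by (rule sv_finite)
  have le: "sqrt \<mu> \<le> sv_max A" unfolding sv_max_def using fin mem by simp
  have "norm (A *v w) \<le> sv_max A * norm w" for w
  proof -
    have "(norm (A *v w))^2 = w \<bullet> (B *v w)" using normsq_mat[of A w] B_def by (simp add: power2_norm_eq_inner)
    also have "\<dots> \<le> \<mu> * (norm w)^2" using bd by (simp add: power2_norm_eq_inner)
    also have "\<dots> = (sqrt \<mu> * norm w)^2" using mu0 by (simp add: power_mult_distrib)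
    finally have "norm (A *v w) \<le> sqrt \<mu> * norm w" by (rule power2_le_imp_le) (use mu0 in simp)
    also have "\<dots> \<le> sv_max A * norm w" using le by (simp add: mult_right_mono)
    finally show ?thesis .
  qed
  then show ?thesis using mem le mu0 by (metis empty_iff order_trans real_sqrt_ge_zero)
qed

lemma sv_min_nonneg:
  fixes A :: "real^'n^'n"
  shows "sv_min A \<ge> 0"
proof -
  have "singular_values A \<noteq> {}" using sv_upper by blast
  then obtain z where "z \<in> singular_values A" by blast
  moreover have "\<forall>z\<in>singular_values A. z \<ge> 0" by (simp add: singular_values_def)
  ultimately show ?thesis unfolding sv_min_def using sv_finite
    by (metis Min_in \<open>singular_values A \<noteq> {}\<close>)
qed

lemma sv_min_le_max:
  fixes A :: "real^'n^'n"
  shows "sv_min A \<le> sv_max A"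
  unfolding sv_min_def sv_max_def using sv_upper sv_finite
  by (metis Max_ge Min_in)

lemma sv_min_pos_inj:
  fixes A :: "real^'n^'n"
  assumes "sv_min A > 0" "A *v w = 0"
  shows "w = 0"
proof (rule ccontr)
  assume "w \<noteq> 0"
  then have "0 \<in> singular_values A" unfolding singular_values_def
    using assms(2) by (auto intro!: exI[of _ w] simp flip: matrix_vector_mul_assoc)
  then have "sv_min A \<le> 0" unfolding sv_min_def using Min_le[OF sv_finite] by blast
  then show False using assms(1) by simp
qed

lemma sv_lower:
  fixes A :: "real^'n^'n"
  assumes inj: "\<forall>v. transpose A *v v = 0 \<longrightarrow> v = 0"
  shows "sv_min A * norm w \<le> norm (transpose A *v w)"
proof -
  define C where "C = A ** transpose A"
  have symC: "transpose C = C" unfolding C_def using sym_ata[of "transpose A"] by simp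
  obtain \<mu>' v where v: "v \<noteq> 0" "- (C *v v) = \<mu>' *\<^sub>R v" and bd: "\<forall>w. w \<bullet> (- (C *v w)) \<le> \<mu>' * (w \<bullet> w)"
    using rayleigh_max[of "\<lambda>w. - (C *v w)"] sym_mat[OF symC]
    by (auto simp: linear_compose_neg)
  define \<mu> where "\<mu> = - \<mu>'"
  have Cv: "C *v v = \<mu> *\<^sub>R v" using v(2) \<mu>_def by (metis minus_minus scaleR_minus_left)
  have bd2: "\<mu> * (w \<bullet> w) \<le> w \<bullet> (C *v w)" for w using bd[rule_format, of w] \<mu>_def by simp
  have nsq: "(transpose A *v w) \<bullet> (transpose A *v w) = w \<bullet> (C *v w)" for w
    using normsq_mat[of "transpose A" w] C_def by simp
  have "\<mu> * (v \<bullet> v) \<ge> 0" using Cv nsq[of v] by (metis inner_ge_zero inner_scaleR_right)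
  moreover have "v \<bullet> v > 0" using v by simp
  ultimately have mu0: "\<mu> \<ge> 0" by (simp add: zero_le_mult_iff)
  define u where "u = transpose A *v v"
  have u0: "u \<noteq> 0" using inj v(1) unfolding u_def by metis
  have "(transpose A ** A) *v u = transpose A *v (C *v v)"
    unfolding u_def C_def by (metis matrix_vector_mul_assoc matrix_mul_assoc)
  also have "\<dots> = \<mu> *\<^sub>R u" by (simp add: Cv u_def matrix_vector_mult_scaleR)
  finally have "sqrt \<mu> \<in> singular_values A"
    unfolding singular_values_def using u0 mu0 by auto
  then have le: "sv_min A \<le> sqrt \<mu>" unfolding sv_min_def using Min_le[OF sv_finite] by blast
  have "(sqrt \<mu> * norm w)^2 = \<mu> * (w \<bullet> w)" using mu0 by (simp add: power_mult_distrib power2_norm_eq_inner)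
  also have "\<dots> \<le> (norm (transpose A *v w))^2" using bd2 nsq by (simp add: power2_norm_eq_inner)
  finally have "sqrt \<mu> * norm w \<le> norm (transpose A *v w)" by (rule power2_le_imp_le) simp
  moreover have "sv_min A * norm w \<le> sqrt \<mu> * norm w" using le by (simp add: mult_right_mono)
  ultimately show ?thesis by linarith
qed



definition outer :: "real^'n \<Rightarrow> real^'n \<Rightarrow> real^'n^'n" where
  "outer u a = (\<chi> r. \<chi> c. u$r * a$c)"

lemma outer_inner: "outer u a \<bullet> d = u \<bullet> (d *v a)"
  by (simp add: outer_def inner_vec_def matrix_vector_mult_def sum_distrib_left mult_ac)

lemma outer_inner2: "outer u a \<bullet> outer v a = (u \<bullet> v) * (a \<bullet> a)"
  by (simp add: outer_def inner_vec_def sum_distrib_left sum_distrib_right mult_ac)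

lemma norm_outer: "norm (outer u a) = norm u * norm a"
  by (simp add: norm_eq_sqrt_inner outer_inner2 real_sqrt_mult)

lemma outer_zero: "outer u a = 0 \<longleftrightarrow> u = 0 \<or> a = 0"
  by (metis norm_eq_zero norm_outer mult_eq_0_iff)

lemma grad_eq:
  fixes f :: "'a::real_inner \<Rightarrow> real"
  assumes "(f has_derivative (\<lambda>d. v \<bullet> d)) (at x)"
  shows "grad f x = v"
  unfolding grad_def
proof (rule the_equality)
  show "(f has_derivative (\<lambda>d. v \<bullet> d)) (at x)" by fact
next
  fix g assume "(f has_derivative (\<lambda>d. g \<bullet> d)) (at x)"
  then have e: "(\<lambda>d. g \<bullet> d) = (\<lambda>d. v \<bullet> d)" using assms has_derivative_unique by blast
  have "g \<bullet> (g - v) = v \<bullet> (g - v)" using fun_cong[OF e, of "g - v"] by simp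
  then have "(g - v) \<bullet> (g - v) = 0" by (simp add: inner_diff_left)
  then show "g = v" by simp
qed

lemma grad_works:
  fixes f :: "'a::euclidean_space \<Rightarrow> real"
  assumes "f differentiable (at x)"
  shows "(f has_derivative (\<lambda>d. grad f x \<bullet> d)) (at x)"
proof -
  obtain f' where f': "(f has_derivative f') (at x)" using assms differentiable_def by blast
  then have lin: "linear f'" using has_derivative_linear by blast
  define v where "v = (\<Sum>b\<in>Basis. f' b *\<^sub>R b)"
  have "f' d = v \<bullet> d" for d
  proof -
    have "f' d = f' (\<Sum>b\<in>Basis. (d \<bullet> b) *\<^sub>R b)" by (simp add: euclidean_representation)
    also have "\<dots> = (\<Sum>b\<in>Basis. (d \<bullet> b) * f' b)" by (simp add: linear_sum[OF lin] linear_scale[OF lin])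
    also have "\<dots> = (\<Sum>b\<in>Basis. f' b * (b \<bullet> d))" by (simp add: inner_commute mult.commute)
    also have "\<dots> = v \<bullet> d" by (simp add: v_def inner_sum_left)
    finally show ?thesis .
  qed
  then have "f' = (\<lambda>d. v \<bullet> d)" by auto
  then have "(f has_derivative (\<lambda>d. v \<bullet> d)) (at x)" using f' by simp
  moreover then have "grad f x = v" by (rule grad_eq)
  ultimately show ?thesis by simp
qed

lemma jac_works:
  assumes "(f::real^'a \<Rightarrow> real^'b) differentiable (at x)"
  shows "(f has_derivative (\<lambda>h. Defs.jacobian f x *v h)) (at x)"
  using jacobian_works[of f "at x"] assms unfolding Defs.jacobian_def Cartesian_Euclidean_Space.jacobian_def by simp

lemma sig_diff:
  assumes "\<forall>t. (s::real\<Rightarrow>real) differentiable (at t)"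
  shows "(\<lambda>h::real^'n. \<chi> j. s (h$j)) differentiable (at h)"
proof -
  have e: "(\<lambda>h::real^'n. \<chi> j. s (h$j)) = (\<lambda>h. \<Sum>j\<in>UNIV. s (h$j) *\<^sub>R axis j 1)"
  proof (rule ext)
    fix h :: "real^'n"
    show "(\<chi> j. s (h$j)) = (\<Sum>j\<in>UNIV. s (h$j) *\<^sub>R axis j 1)"
    proof (subst vec_eq_iff, rule allI)
      fix i
      have "(\<Sum>j\<in>UNIV. s (h$j) *\<^sub>R axis j (1::real)) $ i = (\<Sum>j\<in>UNIV. if j = i then s (h$j) else 0)"
        unfolding sum_component by (intro sum.cong) (auto simp: axis_def)
      also have "\<dots> = s (h$i)" by (simp add: sum.delta')
      finally show "(\<chi> j. s (h$j)) $ i = (\<Sum>j\<in>UNIV. s (h$j) *\<^sub>R axis j 1) $ i" by simp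
    qed
  qed
  have "(\<lambda>h::real^'n. s (h$j)) differentiable (at h)" for j
  proof -
    have "(\<lambda>h::real^'n. h$j) differentiable (at h)"
      by (rule bounded_linear_imp_differentiable) (rule bounded_linear_vec_nth)
    then show ?thesis using assms differentiable_compose[of s "\<lambda>h. h$j"] by (simp add: o_def)
  qed
  then show ?thesis unfolding e
    by (intro differentiable_sum differentiable_scaleR) auto
qed

lemma layer_diff:
  assumes "\<forall>t. s k differentiable (at t)"
  shows "layer W s k differentiable (at h)"
proof -
  have "(\<lambda>z. W k *v z) differentiable (at ((\<chi> j. s k (h$j))))"
    by (rule bounded_linear_imp_differentiable) (simp add: linear_linear[symmetric])
  then show ?thesis unfolding layer_def
    by (rule differentiable_compose[where f="\<lambda>z. W k *v z", OF _ sig_diff[OF assms]])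
qed

lemma prodmat_append: "prodmat J (xs @ ys) = prodmat J xs ** prodmat J ys"
  by (induct xs) (simp_all add: matrix_mul_assoc)

lemma det_prodmat: "det (prodmat J ks) = prod_list (map (\<lambda>k. det (J k)) ks)"
  by (induct ks) (simp_all add: det_mul)

lemma fwd_below: "k < i \<Longrightarrow> fwd (W(i:=V)) s x k = fwd W s x k"
  by (induct k) (simp_all add: layer_def)

lemma lin_mva: "linear (\<lambda>V::real^'n^'n. V *v a)"
  by (rule linearI) (simp_all add: matrix_vector_mult_add_rdistrib matrix_vector_mult_def vec_eq_iff sum_distrib_left distrib_left sum.distrib mult_ac)



lemma derivF:
  fixes W :: "nat \<Rightarrow> real^'n^'n"
  assumes sd: "\<forall>k\<in>{1..M}. \<forall>t. s k differentiable (at t)" and i: "1 \<le> i"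
  shows "i \<le> k \<Longrightarrow> k \<le> M \<Longrightarrow> ((\<lambda>V. fwd (W(i:=V)) s x k) has_derivative
     (\<lambda>d. prodmat (\<lambda>k. Defs.jacobian (layer W s k) (fwd W s x (k-1))) (rev [i+1..<k+1]) *v (d *v (\<chi> j. s i (fwd W s x (i-1) $ j))))) (at (W i))"
proof (induction k)
  case 0
  then show ?case using i by simp
next
  case (Suc k)
  let ?a = "\<chi> j. s i (fwd W s x (i-1) $ j)"
  let ?D = "\<lambda>k. Defs.jacobian (layer W s k) (fwd W s x (k-1))"
  show ?case
  proof (cases "Suc k = i")
    case True
    have e: "(\<lambda>V. fwd (W(i:=V)) s x (Suc k)) = (\<lambda>V. V *v ?a)"
    proof (rule ext)
      fix V
      have "fwd (W(i:=V)) s x (Suc k) = layer (W(i:=V)) s (Suc k) (fwd (W(i:=V)) s x k)" by simp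
      also have "\<dots> = V *v ?a" using True fwd_below[of k i W V s x] by (auto simp: layer_def)
      finally show "fwd (W(i:=V)) s x (Suc k) = V *v ?a" .
    qed
    have "((\<lambda>V. V *v ?a) has_derivative (\<lambda>V. V *v ?a)) (at (W i))"
      by (rule bounded_linear_imp_has_derivative) (use lin_mva linear_linear in blast)
    then show ?thesis unfolding e using True by simp
  next
    case False
    then have ik: "i \<le> k" "k \<le> M" using Suc.prems by auto
    note IH = Suc.IH[OF ik]
    have e: "(\<lambda>V. fwd (W(i:=V)) s x (Suc k)) = (\<lambda>V. layer W s (Suc k) (fwd (W(i:=V)) s x k))"
      using False by (auto simp: layer_def)
    have sdk: "\<forall>t. s (Suc k) differentiable (at t)" using sd Suc.prems by auto
    have dl: "(layer W s (Suc k) has_derivative (\<lambda>h. ?D (Suc k) *v h)) (at (fwd W s x k))"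
      apply simp
      apply (rule jac_works)
      apply (rule layer_diff)
      apply (rule sdk)
      done
    have dl': "(layer W s (Suc k) has_derivative (\<lambda>h. ?D (Suc k) *v h)) (at (fwd (W(i:=W i)) s x k))"
      using dl by simp
    have c: "((\<lambda>V. layer W s (Suc k) (fwd (W(i:=V)) s x k)) has_derivative
        (\<lambda>d. ?D (Suc k) *v (prodmat ?D (rev [i+1..<k+1]) *v (d *v ?a)))) (at (W i))"
      by (rule has_derivative_compose[OF IH dl'])
    have r: "rev [i+1..<Suc k+1] = Suc k # rev [i+1..<k+1]" using ik by simp
    have pm: "prodmat ?D (rev [i+1..<Suc k+1]) = ?D (Suc k) ** prodmat ?D (rev [i+1..<k+1])"
      by (simp only: r prodmat.simps)
    show ?thesis unfolding e pm
      by (rule has_derivative_eq_rhs[OF c]) (rule ext, simp only: matrix_vector_mul_assoc matrix_mul_assoc)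
  qed
qed

lemma tp_val:
  assumes g_inv: "\<forall>k\<in>{1..M}. \<forall>h. g k (layer W s k h) = h \<and> layer W s k (g k h) = h"
  shows "j \<le> M \<Longrightarrow> tp_back g M (fwd W s x M) j = fwd W s x (M - j)"
proof (induction j)
  case 0 then show ?case by simp
next
  case (Suc j)
  have e: "M - j = Suc (M - Suc j)" using Suc.prems by simp
  have "tp_back g M (fwd W s x M) (Suc j) = g (M - j) (fwd W s x (M - j))" using Suc by simp
  also have "\<dots> = g (M - j) (layer W s (M - j) (fwd W s x (M - Suc j)))" using e by (metis fwd.simps(2))
  also have "\<dots> = fwd W s x (M - Suc j)" using g_inv Suc.prems by auto
  finally show ?case .
qed



lemma layer_cont:
  assumes "\<forall>t. s k differentiable (at t)"
  shows "continuous_on UNIV (layer W s k)"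
  by (metis assms continuous_at_imp_continuous_on differentiable_imp_continuous_within layer_diff)

lemma tp_deriv:
  fixes W :: "nat \<Rightarrow> real^'n^'n"
  assumes sd: "\<forall>k\<in>{1..M}. \<forall>t. s k differentiable (at t)"
    and g_inv: "\<forall>k\<in>{1..M}. \<forall>h. g k (layer W s k h) = h \<and> layer W s k (g k h) = h"
    and Dinv: "\<forall>k\<in>{i+1..M}. invertible (Defs.jacobian (layer W s k) (fwd W s x (k-1)))"
  shows "j \<le> M - i \<Longrightarrow> \<exists>Q. ((\<lambda>v. tp_back g M v j) has_derivative (\<lambda>v. Q *v v)) (at (fwd W s x M)) \<and>
      prodmat (\<lambda>k. Defs.jacobian (layer W s k) (fwd W s x (k-1))) (rev [M-j+1..<M+1]) ** Q = mat 1"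
proof (induction j)
  case 0
  have "((\<lambda>v. tp_back g M v 0) has_derivative (\<lambda>v. mat 1 *v v)) (at (fwd W s x M))"
    by (simp add: has_derivative_ident)
  then show ?case by (intro exI[of _ "mat 1"]) simp
next
  case (Suc j)
  let ?D = "\<lambda>k. Defs.jacobian (layer W s k) (fwd W s x (k-1))"
  define k where "k = M - j"
  have k: "i + 1 \<le> k" "k \<le> M" "1 \<le> k" using Suc.prems k_def by auto
  obtain Q where Q: "((\<lambda>v. tp_back g M v j) has_derivative (\<lambda>v. Q *v v)) (at (fwd W s x M))"
     and PQ: "prodmat ?D (rev [M-j+1..<M+1]) ** Q = mat 1"
    using Suc.IH Suc.prems by auto
  obtain Dk' where Dk': "?D k ** Dk' = mat 1" using Dinv k invertible_def by (metis atLeastAtMost_iff)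
  have sdk: "\<forall>t. s k differentiable (at t)" using sd k by auto
  have hF: "(layer W s k has_derivative (\<lambda>v. ?D k *v v)) (at (fwd W s x (k-1)))"
    by (rule jac_works, rule layer_diff, rule sdk)
  have idc: "(\<lambda>v. ?D k *v v) \<circ> (\<lambda>v. Dk' *v v) = id"
    by (rule ext) (use Dk' in \<open>simp add: matrix_vector_mul_assoc\<close>)
  have gk: "(g k has_derivative (\<lambda>v. Dk' *v v)) (at (layer W s k (fwd W s x (k-1))))"
    by (rule has_derivative_inverse_strong[OF open_UNIV UNIV_I layer_cont[of s k W, OF sdk] _ hF idc])
      (use g_inv k in auto)
  have fk: "layer W s k (fwd W s x (k-1)) = fwd W s x k" using k by (metis Suc_diff_1 fwd.simps(2) le_trans less_eq_Suc_le zero_less_one)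
  have tv: "tp_back g M (fwd W s x M) j = fwd W s x k"
    using tp_val[OF g_inv, of j x] Suc.prems k_def by simp
  have gk': "(g k has_derivative (\<lambda>v. Dk' *v v)) (at (tp_back g M (fwd W s x M) j))"
    using gk fk tv by simp
  have comp: "((\<lambda>v. g k (tp_back g M v j)) has_derivative (\<lambda>v. Dk' *v (Q *v v))) (at (fwd W s x M))"
    by (rule has_derivative_compose[OF Q gk'])
  have e1: "(\<lambda>v. tp_back g M v (Suc j)) = (\<lambda>v. g k (tp_back g M v j))" by (simp add: k_def)
  have e2: "(\<lambda>v. Dk' *v (Q *v v)) = (\<lambda>v. (Dk' ** Q) *v v)" by (simp add: matrix_vector_mul_assoc)
  have r: "rev [M - Suc j + 1..<M+1] = rev [M-j+1..<M+1] @ [k]"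
  proof -
    have "M - Suc j + 1 = k" "M - j + 1 = k + 1" using k k_def by auto
    moreover have "[k..<M+1] = k # [k+1..<M+1]" using k by (simp add: upt_conv_Cons)
    ultimately show ?thesis by simp
  qed
  have "prodmat ?D (rev [M - Suc j + 1..<M+1]) ** (Dk' ** Q) = mat 1"
  proof -
    have "prodmat ?D (rev [M - Suc j + 1..<M+1]) ** (Dk' ** Q) =
        prodmat ?D (rev [M-j+1..<M+1]) ** ((?D k ** Dk') ** Q)"
      unfolding r prodmat_append prodmat.simps by (simp only: matrix_mul_rid matrix_mul_assoc)
    also have "\<dots> = mat 1" unfolding Dk' matrix_mul_lid by (rule PQ)
    finally show ?thesis .
  qed
  then show ?case using comp unfolding e1 e2 by blast
qed



lemma cosbound:
  fixes P Q :: "real^'n^'n" and gL :: "real^'n"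
  assumes PQ: "P ** Q = mat 1" and g0: "gL \<noteq> 0" and lp: "sv_min (transpose P) > 0"
  shows "Q *v gL \<noteq> 0" "transpose P *v gL \<noteq> 0"
    "sv_min (transpose P) / sv_max (transpose P) \<le>
       ((Q *v gL) \<bullet> (transpose P *v gL)) / (norm (Q *v gL) * norm (transpose P *v gL))"
proof -
  define A where "A = transpose P"
  define lm where "lm = sv_min A"
  define lM where "lM = sv_max A"
  define u where "u = Q *v gL"
  define b where "b = A *v gL"
  have Pu: "P *v u = gL" by (simp add: u_def matrix_vector_mul_assoc PQ)
  show u0: "Q *v gL \<noteq> 0" using Pu g0 u_def by auto
  show b0: "transpose P *v gL \<noteq> 0" using sv_min_pos_inj[OF lp] g0 by blast
  have QP: "Q ** P = mat 1" using PQ matrix_left_right_inverse by blast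
  have inj: "\<forall>v. transpose A *v v = 0 \<longrightarrow> v = 0"
    by (auto simp: A_def) (metis QP matrix_vector_mul_assoc matrix_vector_mul_lid matrix_vector_mult_0_right)
  have lo: "lm * norm u \<le> norm gL" using sv_lower[OF inj, of u] Pu by (simp add: lm_def A_def)
  have up: "norm b \<le> lM * norm gL" using sv_upper[of A] by (simp add: b_def lM_def)
  have lmp: "lm > 0" using lp by (simp add: lm_def A_def)
  have lMp: "lM > 0" using lmp sv_min_le_max[of A] by (simp add: lm_def lM_def)
  have ub: "u \<bullet> b = gL \<bullet> gL"
    by (metis A_def Pu b_def dot_lmul_matrix inner_commute transpose_matrix_vector)
  have nu: "norm u > 0" using u0 u_def by simp
  have nb: "norm b > 0" using b0 b_def A_def by simp
  have "lm * norm u * norm b \<le> norm gL * (lM * norm gL)"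
    by (rule mult_mono[OF lo up]) (use lmp in auto)
  then have "lm * (norm u * norm b) \<le> (gL \<bullet> gL) * lM"
    by (simp add: power2_norm_eq_inner[symmetric] power2_eq_square mult_ac)
  then have "lm / lM \<le> (u \<bullet> b) / (norm u * norm b)"
    using nu nb lMp ub by (simp add: divide_le_eq le_divide_eq mult_ac)
  then show "sv_min (transpose P) / sv_max (transpose P) \<le>
       ((Q *v gL) \<bullet> (transpose P *v gL)) / (norm (Q *v gL) * norm (transpose P *v gL))"
    by (simp add: lm_def lM_def A_def u_def b_def)
qed

lemma diffquot:
  fixes G :: "real^'n \<Rightarrow> real^'n"
  assumes G: "(G has_derivative (\<lambda>v. Q *v v)) (at h0)"
  shows "((\<lambda>\<eta>. (1/\<eta>) *\<^sub>R (G h0 - G (h0 - \<eta> *\<^sub>R g))) \<longlongrightarrow> Q *v g) (at_right 0)"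
proof -
  define \<psi> where "\<psi> = (\<lambda>\<eta>::real. G (h0 - \<eta> *\<^sub>R g))"
  define v where "v = - (Q *v g)"
  have lin: "((\<lambda>\<eta>::real. h0 - \<eta> *\<^sub>R g) has_derivative (\<lambda>\<eta>. - (\<eta> *\<^sub>R g))) (at 0)"
    by (auto intro!: derivative_eq_intros)
  have G': "(G has_derivative (\<lambda>v. Q *v v)) (at (h0 - 0 *\<^sub>R g))" using G by simp
  have d: "(\<psi> has_derivative (\<lambda>\<eta>. Q *v (- (\<eta> *\<^sub>R g)))) (at 0)"
    unfolding \<psi>_def by (rule has_derivative_compose[OF lin G'])
  have e: "(\<lambda>\<eta>. Q *v (- (\<eta> *\<^sub>R g))) = (\<lambda>\<eta>. \<eta> *\<^sub>R v)"
    by (rule ext) (simp add: v_def linear_neg[OF matrix_vector_mul_linear] matrix_vector_mult_scaleR)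
  have "(\<lambda>h. norm (\<psi> (0 + h) - \<psi> 0 - h *\<^sub>R v) / norm h) \<midarrow>0\<rightarrow> 0"
    using d[unfolded e, unfolded has_derivative_at] by (rule conjunct2)
  then have lim0: "((\<lambda>h. norm ((1/h) *\<^sub>R (G h0 - G (h0 - h *\<^sub>R g)) - Q *v g)) \<longlongrightarrow> 0) (at 0)"
  proof (rule Lim_transform_eventually)
    show "\<forall>\<^sub>F h in at 0. norm (\<psi> (0 + h) - \<psi> 0 - h *\<^sub>R v) / norm h =
            norm ((1/h) *\<^sub>R (G h0 - G (h0 - h *\<^sub>R g)) - Q *v g)"
      unfolding eventually_at_filter
    proof (rule always_eventually, intro allI impI)
      fix h :: real assume h: "h \<noteq> 0" and "h \<in> UNIV"
      have "(1/h) *\<^sub>R (G h0 - G (h0 - h *\<^sub>R g)) - Q *v g = - ((1/h) *\<^sub>R (\<psi> (0 + h) - \<psi> 0 - h *\<^sub>R v))"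
        using h by (simp add: \<psi>_def v_def algebra_simps)
      then show "norm (\<psi> (0 + h) - \<psi> 0 - h *\<^sub>R v) / norm h =
            norm ((1/h) *\<^sub>R (G h0 - G (h0 - h *\<^sub>R g)) - Q *v g)"
        by (simp add: divide_inverse mult.commute)
    qed
  qed
  then have "((\<lambda>h. (1/h) *\<^sub>R (G h0 - G (h0 - h *\<^sub>R g))) \<longlongrightarrow> Q *v g) (at 0)"
    using tendsto_norm_zero_iff Lim_null by blast
  then show ?thesis using tendsto_mono[OF at_le[OF subset_UNIV]] by blast
qed

lemma outer_inner': "d \<bullet> outer u a = u \<bullet> (d *v a)"
  by (metis inner_commute outer_inner)

lemma gradsq:
  fixes a t :: "real^'n" and W0 :: "real^'n^'n"
  shows "grad (\<lambda>V. (norm (V *v a - t))\<^sup>2) W0 = outer (2 *\<^sub>R (W0 *v a - t)) a"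
proof (rule grad_eq)
  have bl: "bounded_linear (\<lambda>V::real^'n^'n. V *v a)" using lin_mva linear_linear by blast
  have d1: "((\<lambda>V. V *v a - t) has_derivative (\<lambda>V. V *v a)) (at W0)"
    using has_derivative_diff[OF bounded_linear_imp_has_derivative[OF bl] has_derivative_const] by simp
  have "((\<lambda>V. (V *v a - t) \<bullet> (V *v a - t)) has_derivative
      (\<lambda>d. (W0 *v a - t) \<bullet> (d *v a) + (d *v a) \<bullet> (W0 *v a - t))) (at W0)"
    by (rule has_derivative_inner[OF d1 d1])
  then show "((\<lambda>V. (norm (V *v a - t))\<^sup>2) has_derivative (\<lambda>d. outer (2 *\<^sub>R (W0 *v a - t)) a \<bullet> d)) (at W0)"
    unfolding power2_norm_eq_inner
    by (rule has_derivative_eq_rhs) (rule ext, simp add: outer_inner' inner_commute)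
qed

lemma cos_vangle: "cos (vangle u v) = (u \<bullet> v) / (norm u * norm v)"
proof -
  have "\<bar>u \<bullet> v\<bar> \<le> norm u * norm v" by (rule Cauchy_Schwarz_ineq2)
  then have z: "\<bar>(u \<bullet> v) / (norm u * norm v)\<bar> \<le> 1"
    by (cases "norm u * norm v = 0") (auto simp: abs_div divide_le_eq_1)
  have "-1 \<le> (u \<bullet> v) / (norm u * norm v)" using abs_le_D2[OF z] by linarith
  moreover have "(u \<bullet> v) / (norm u * norm v) \<le> 1" using abs_le_D1[OF z] .
  ultimately show ?thesis unfolding vangle_def by (intro cos_arccos) auto
qed

lemma cos_outer:
  assumes "a \<noteq> 0"
  shows "cos (vangle (- outer p a) (- outer b a)) = (p \<bullet> b) / (norm p * norm b)"
proof -
  have "a \<bullet> a = norm a * norm a" by (simp add: power2_norm_eq_inner[symmetric] power2_eq_square)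
  moreover have "norm a > 0" using assms by simp
  ultimately show ?thesis unfolding cos_vangle
    by (simp add: outer_inner2 norm_outer)
qed

lemma phi_scale:
  assumes "c > 0"
  shows "((c *\<^sub>R p) \<bullet> b) / (norm (c *\<^sub>R p) * norm b) = (p \<bullet> b) / (norm p * norm b)"
  using assms by simp



theorem theorem1:
  fixes W :: "nat \<Rightarrow> real^'n^'n"
    and s :: "nat \<Rightarrow> real \<Rightarrow> real"
    and g :: "nat \<Rightarrow> real^'n \<Rightarrow> real^'n"
    and L :: "real^'n \<Rightarrow> 'y \<Rightarrow> real"
    and x :: "real^'n" and y :: 'y
    and M i :: nat
  assumes M: "M \<ge> 1" and i: "1 \<le> i" "i \<le> M"
    and s_diff: "\<forall>k\<in>{1..M}. \<forall>t. s k differentiable (at t)"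
    and s_mono: "\<forall>k\<in>{1..M}. mono (s k)"
    and f_bij: "\<forall>k\<in>{1..M}. bij (layer W s k)"
    and g_inv: "\<forall>k\<in>{1..M}. \<forall>h. g k (layer W s k h) = h \<and> layer W s k (g k h) = h"
    and L_diff: "\<forall>h. (\<lambda>h. L h y) differentiable (at h)"
    and bp_nonzero: "grad (\<lambda>V. L (fwd (W(i := V)) s x M) y) (W i) \<noteq> 0"
    and lmin_pos: "sv_min (transpose (prodmat (\<lambda>k. jacobian (layer W s k) (fwd W s x (k - 1)))
                                         (rev [i+1..<M+1]))) > 0"
  shows
   "let dWbp = - grad (\<lambda>V. L (fwd (W(i := V)) s x M) y) (W i);
        hM = fwd W s x M;
        gL = grad (\<lambda>h. L h y) hM;
        tgt = (\<lambda>\<eta>::real. tp_back g M (hM - \<eta> *\<^sub>R gL) (M - i));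
        dWtp = (\<lambda>\<eta>. - grad (\<lambda>V. (norm (V *v (\<chi> j. s i (fwd W s x (i - 1) $ j)) - tgt \<eta>))\<^sup>2) (W i));
        P = prodmat (\<lambda>k. jacobian (layer W s k) (fwd W s x (k - 1))) (rev [i+1..<M+1]);
        lmax = sv_max (transpose P);
        lmin = sv_min (transpose P)
    in \<exists>\<Delta>1 \<Delta>2 :: real \<Rightarrow> real.
         (\<Delta>1 \<longlongrightarrow> 0) (at_right 0) \<and> (\<Delta>2 \<longlongrightarrow> 0) (at_right 0) \<and>
         (\<forall>\<^sub>F \<eta> in at_right 0.
            0 < (1 + \<Delta>1 \<eta>) / (lmax / lmin + \<Delta>2 \<eta>) \<and>
            (1 + \<Delta>1 \<eta>) / (lmax / lmin + \<Delta>2 \<eta>) \<le> cos (vangle (dWtp \<eta>) dWbp) \<and>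
            cos (vangle (dWtp \<eta>) dWbp) \<le> 1)"
proof -
  define a where "a = (\<chi> j. s i (fwd W s x (i - 1) $ j))"
  define D where "D = (\<lambda>k. Defs.jacobian (layer W s k) (fwd W s x (k - 1)))"
  define P where "P = prodmat D (rev [i+1..<M+1])"
  define hM where "hM = fwd W s x M"
  define gL where "gL = grad (\<lambda>h. L h y) hM"
  define b where "b = transpose P *v gL"
  define dWbp where "dWbp = - grad (\<lambda>V. L (fwd (W(i := V)) s x M) y) (W i)"
  define tgt where "tgt = (\<lambda>\<eta>::real. tp_back g M (hM - \<eta> *\<^sub>R gL) (M - i))"
  define dWtp where "dWtp = (\<lambda>\<eta>. - grad (\<lambda>V. (norm (V *v (\<chi> j. s i (fwd W s x (i - 1) $ j)) - tgt \<eta>))\<^sup>2) (W i))"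
  define lmax where "lmax = sv_max (transpose P)"
  define lmin where "lmin = sv_min (transpose P)"
  have lp: "sv_min (transpose P) > 0" using lmin_pos unfolding P_def D_def .
  have dF: "((\<lambda>V. fwd (W(i:=V)) s x M) has_derivative (\<lambda>d. P *v (d *v a))) (at (W i))"
    using derivF[OF s_diff i(1) i(2) order_refl] unfolding P_def D_def a_def .
  have dL: "((\<lambda>h. L h y) has_derivative (\<lambda>d. gL \<bullet> d)) (at hM)"
    unfolding gL_def by (rule grad_works) (use L_diff in blast)
  have dL': "((\<lambda>h. L h y) has_derivative (\<lambda>d. gL \<bullet> d)) (at (fwd (W(i:=W i)) s x M))"
    using dL by (simp add: hM_def)
  have comp: "((\<lambda>V. L (fwd (W(i:=V)) s x M) y) has_derivative (\<lambda>d. gL \<bullet> (P *v (d *v a)))) (at (W i))"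
    by (rule has_derivative_compose[OF dF dL'])
  have eqd: "(\<lambda>d. gL \<bullet> (P *v (d *v a))) = (\<lambda>d. outer b a \<bullet> d)"
    by (rule ext) (simp add: outer_inner b_def dot_lmul_matrix)
  have gbp: "grad (\<lambda>V. L (fwd (W(i := V)) s x M) y) (W i) = outer b a"
    by (rule grad_eq) (use comp eqd in simp)
  have dWbp_eq: "dWbp = - outer b a" by (simp add: dWbp_def gbp)
  have ab: "b \<noteq> 0" "a \<noteq> 0" using bp_nonzero gbp outer_zero by auto
  have g0: "gL \<noteq> 0" using ab(1) b_def by auto
  have injA: "\<forall>w. transpose P *v w = 0 \<longrightarrow> w = 0" using sv_min_pos_inj[OF lp] by blast
  then obtain B where "B ** transpose P = mat 1" using matrix_left_invertible_ker by blast
  then have "invertible (transpose P)" using invertible_left_inverse by blast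
  then have "invertible P" using transpose_invertible[of "transpose P"] by simp
  then have detP: "det P \<noteq> 0" using invertible_det_nz by blast
  have Dinv: "\<forall>k\<in>{i+1..M}. invertible (Defs.jacobian (layer W s k) (fwd W s x (k-1)))"
  proof
    fix k assume k: "k \<in> {i+1..M}"
    have "det P = prod_list (map (\<lambda>k. det (D k)) (rev [i+1..<M+1]))" by (simp add: P_def det_prodmat)
    then have "0 \<notin> set (map (\<lambda>k. det (D k)) (rev [i+1..<M+1]))" using detP prod_list_zero_iff by metis
    moreover have "k \<in> set (rev [i+1..<M+1])" using k by auto
    ultimately have "det (D k) \<noteq> 0" by auto
    then show "invertible (Defs.jacobian (layer W s k) (fwd W s x (k-1)))"
      using invertible_det_nz D_def by metis
  qed
  obtain Q where GQ: "((\<lambda>v. tp_back g M v (M - i)) has_derivative (\<lambda>v. Q *v v)) (at (fwd W s x M))"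
     and PQ0: "prodmat (\<lambda>k. Defs.jacobian (layer W s k) (fwd W s x (k-1))) (rev [M-(M-i)+1..<M+1]) ** Q = mat 1"
    using tp_deriv[OF s_diff g_inv Dinv, of "M - i"] by auto
  have PQ: "P ** Q = mat 1" using PQ0 i(2) by (simp add: P_def D_def)
  define hi where "hi = fwd W s x i"
  have tv: "tp_back g M hM (M - i) = hi" using tp_val[OF g_inv, of "M - i" x] i(2) by (simp add: hM_def hi_def)
  have hia: "W i *v a = hi"
  proof -
    obtain i' where i': "i = Suc i'" using i(1) by (metis Suc_le_D One_nat_def)
    show ?thesis by (simp add: hi_def a_def i' layer_def)
  qed
  define u where "u = (\<lambda>\<eta>::real. (1/\<eta>) *\<^sub>R (hi - tgt \<eta>))"
  have lim_u: "(u \<longlongrightarrow> Q *v gL) (at_right 0)"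
    using diffquot[OF GQ, of gL] tv unfolding u_def tgt_def hM_def by simp
  have dWtp_eq: "dWtp \<eta> = - outer (2 *\<^sub>R (hi - tgt \<eta>)) a" for \<eta>
    unfolding dWtp_def a_def[symmetric] gradsq hia ..
  define \<phi> where "\<phi> = (\<lambda>z. (z \<bullet> b) / (norm z * norm b))"
  define C where "C = (\<lambda>\<eta>. cos (vangle (dWtp \<eta>) dWbp))"
  have Cu: "C \<eta> = \<phi> (u \<eta>)" if "\<eta> > 0" for \<eta>
  proof -
    have "2 *\<^sub>R (hi - tgt \<eta>) = (2 * \<eta>) *\<^sub>R u \<eta>" using that by (simp add: u_def)
    then have "C \<eta> = \<phi> ((2 * \<eta>) *\<^sub>R u \<eta>)"
      unfolding C_def dWtp_eq dWbp_eq cos_outer[OF ab(2)] \<phi>_def by simp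
    also have "\<dots> = \<phi> (u \<eta>)" unfolding \<phi>_def by (rule phi_scale) (use that in simp)
    finally show ?thesis .
  qed
  have cb: "Q *v gL \<noteq> 0" "lmin / lmax \<le> \<phi> (Q *v gL)"
    using cosbound[OF PQ g0 lp] by (simp_all add: lmin_def lmax_def \<phi>_def b_def)
  have lim_phi: "((\<lambda>\<eta>. \<phi> (u \<eta>)) \<longlongrightarrow> \<phi> (Q *v gL)) (at_right 0)"
    unfolding \<phi>_def
    by (intro tendsto_intros lim_u) (use cb(1) ab(1) in simp)
  have lim_C: "(C \<longlongrightarrow> \<phi> (Q *v gL)) (at_right 0)"
  proof (rule Lim_transform_eventually[OF lim_phi])
    show "\<forall>\<^sub>F \<eta> in at_right 0. \<phi> (u \<eta>) = C \<eta>"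
      using eventually_at_right_less[of "0::real"] by eventually_elim (simp add: Cu)
  qed
  define c where "c = \<phi> (Q *v gL)"
  have lminp: "lmin > 0" using lp lmin_def by simp
  have lmaxp: "lmax > 0" using lminp sv_min_le_max[of "transpose P"] by (simp add: lmin_def lmax_def)
  define \<kappa> where "\<kappa> = lmax / lmin"
  have kp: "\<kappa> > 0" using lminp lmaxp by (simp add: \<kappa>_def)
  have kc: "\<kappa> * c \<ge> 1"
  proof -
    have "\<kappa> * (lmin / lmax) \<le> \<kappa> * c" using mult_left_mono[OF cb(2), of \<kappa>] kp c_def by simp
    moreover have "\<kappa> * (lmin / lmax) = 1" using lminp lmaxp by (simp add: \<kappa>_def)
    ultimately show ?thesis by linarith
  qed
  define \<Delta>1 where "\<Delta>1 = (\<lambda>\<eta>. min 0 (\<kappa> * C \<eta> - 1))"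
  have lim1: "(\<Delta>1 \<longlongrightarrow> 0) (at_right 0)"
  proof -
    have "(\<Delta>1 \<longlongrightarrow> min 0 (\<kappa> * c - 1)) (at_right 0)"
      unfolding \<Delta>1_def c_def by (intro tendsto_intros lim_C)
    moreover have "min 0 (\<kappa> * c - 1) = 0" using kc by simp
    ultimately show ?thesis by simp
  qed
  have ev: "\<forall>\<^sub>F \<eta> in at_right 0. - 1/2 < \<Delta>1 \<eta>"
    using order_tendstoD(1)[OF lim1, of "-1/2"] by simp
  have main: "\<exists>\<Delta>1 \<Delta>2 :: real \<Rightarrow> real.
         (\<Delta>1 \<longlongrightarrow> 0) (at_right 0) \<and> (\<Delta>2 \<longlongrightarrow> 0) (at_right 0) \<and>
         (\<forall>\<^sub>F \<eta> in at_right 0.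
            0 < (1 + \<Delta>1 \<eta>) / (lmax / lmin + \<Delta>2 \<eta>) \<and>
            (1 + \<Delta>1 \<eta>) / (lmax / lmin + \<Delta>2 \<eta>) \<le> cos (vangle (dWtp \<eta>) dWbp) \<and>
            cos (vangle (dWtp \<eta>) dWbp) \<le> 1)"
  proof (intro exI conjI)
    show "(\<Delta>1 \<longlongrightarrow> 0) (at_right 0)" by (rule lim1)
    show "((\<lambda>_. 0::real) \<longlongrightarrow> 0) (at_right 0)" by simp
    show "\<forall>\<^sub>F \<eta> in at_right 0.
            0 < (1 + \<Delta>1 \<eta>) / (lmax / lmin + 0) \<and>
            (1 + \<Delta>1 \<eta>) / (lmax / lmin + 0) \<le> cos (vangle (dWtp \<eta>) dWbp) \<and>
            cos (vangle (dWtp \<eta>) dWbp) \<le> 1"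
      using ev
    proof eventually_elim
      case (elim \<eta>)
      have k: "lmax / lmin = \<kappa>" by (simp add: \<kappa>_def)
      have p1: "0 < (1 + \<Delta>1 \<eta>) / \<kappa>" using elim kp by simp
      have "1 + \<Delta>1 \<eta> \<le> \<kappa> * C \<eta>" unfolding \<Delta>1_def by simp
      then have p2: "(1 + \<Delta>1 \<eta>) / \<kappa> \<le> C \<eta>" using kp by (simp add: divide_le_eq mult.commute)
      show ?case using p1 p2 unfolding k C_def by simp
    qed
  qed
  then show ?thesis
    unfolding Let_def dWtp_def dWbp_def tgt_def hM_def gL_def lmax_def lmin_def P_def D_def .
qed

end
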